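(* Let $A=\mathbb{C}[x,y,z]$, let $s,t\in A\setminus\{0\}$ be coprime and equip $A$ with the Poisson bracket determined by $\{x,y\}=t s_z-s t_z$, $\{y,z\}=t s_x-s t_x$, $\{z,x\}=t s_y-s t_y$. For $(\lambda,\mu)\in\mathbb{P}^1(\mathbb{C})$ put $f_{\lambda,\mu}=\lambda s-\mu t$. Then the Poisson prime ideals of $A$ are exactly: $0$; the residually null Poisson prime ideals; and the height one prime ideals $uA$, where $u$ is an irreducible factor of $f_{\lambda,\mu}$ for some $(\lambda,\mu)\in\mathbb{P}^1(\mathbb{C})$ such that $f_{\lambda,\mu}$ is a non-zero non-unit.
   Context: Subscripts denote partial derivatives. A Poisson prime ideal is a prime ideal $P$ with $\{a,P\}\subseteq P$ for all $a\in A$. A Poisson ideal $I$ is residually null if the induced bracket on $A/I$ is zero, equivalently $I$ contains $\{x,y\},\{y,z\},\{z,x\}$; thus the residually null Poisson primes are exactly the prime ideals containing these three elements. *)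

theory Defs
  imports Complex_Main "HOL-Computational_Algebra.Computational_Algebra"
begin

text \<open>The polynomial ring A = C[x,y,z] is represented as iterated univariate
polynomials: complex poly poly poly, where the outermost variable is x,
the middle one is y and the innermost one is z.\<close>

type_synonym cpoly3 = "complex poly poly poly"

definition X :: cpoly3 where "X = [:0, 1:]"
definition Y :: cpoly3 where "Y = [:[:0, 1:]:]"
definition Z :: cpoly3 where "Z = [:[:[:0, 1:]:]:]"

definition const3 :: "complex \<Rightarrow> cpoly3" where "const3 c = [:[:[:c:]:]:]"

definition dx :: "cpoly3 \<Rightarrow> cpoly3" where "dx p = pderiv p"
definition dy :: "cpoly3 \<Rightarrow> cpoly3" where "dy p = map_poly pderiv p"
definition dz :: "cpoly3 \<Rightarrow> cpoly3" where "dz p = map_poly (map_poly pderiv) p"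

text \<open>The Jacobian-type Poisson bracket determined by the values
{x,y} = t s_z - s t_z, {y,z} = t s_x - s t_x, {z,x} = t s_y - s t_y
(the unique biderivation with these values on the generators).\<close>

definition bxy :: "cpoly3 \<Rightarrow> cpoly3 \<Rightarrow> cpoly3" where
  "bxy s t = t * dz s - s * dz t"
definition byz :: "cpoly3 \<Rightarrow> cpoly3 \<Rightarrow> cpoly3" where
  "byz s t = t * dx s - s * dx t"
definition bzx :: "cpoly3 \<Rightarrow> cpoly3 \<Rightarrow> cpoly3" where
  "bzx s t = t * dy s - s * dy t"

definition pbr :: "cpoly3 \<Rightarrow> cpoly3 \<Rightarrow> cpoly3 \<Rightarrow> cpoly3 \<Rightarrow> cpoly3" where
  "pbr s t a b =
     bxy s t * (dx a * dy b - dy a * dx b)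
   + byz s t * (dy a * dz b - dz a * dy b)
   + bzx s t * (dz a * dx b - dx a * dz b)"

definition is_ideal :: "'a::comm_ring_1 set \<Rightarrow> bool" where
  "is_ideal I \<longleftrightarrow> 0 \<in> I \<and> (\<forall>a\<in>I. \<forall>b\<in>I. a + b \<in> I) \<and> (\<forall>r. \<forall>a\<in>I. r * a \<in> I)"

definition is_prime_ideal :: "'a::comm_ring_1 set \<Rightarrow> bool" where
  "is_prime_ideal P \<longleftrightarrow> is_ideal P \<and> P \<noteq> UNIV \<and> (\<forall>a b. a * b \<in> P \<longrightarrow> a \<in> P \<or> b \<in> P)"

definition principal_ideal :: "'a::comm_ring_1 \<Rightarrow> 'a set" where
  "principal_ideal u = {u * a | a. True}"

definition poisson_prime :: "cpoly3 \<Rightarrow> cpoly3 \<Rightarrow> cpoly3 set \<Rightarrow> bool" where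
  "poisson_prime s t P \<longleftrightarrow> is_prime_ideal P \<and> (\<forall>a. \<forall>p\<in>P. pbr s t a p \<in> P)"

definition residually_null :: "cpoly3 \<Rightarrow> cpoly3 \<Rightarrow> cpoly3 set \<Rightarrow> bool" where
  "residually_null s t P \<longleftrightarrow> pbr s t X Y \<in> P \<and> pbr s t Y Z \<in> P \<and> pbr s t Z X \<in> P"

definition fpencil :: "cpoly3 \<Rightarrow> cpoly3 \<Rightarrow> complex \<Rightarrow> complex \<Rightarrow> cpoly3" where
  "fpencil s t l m = const3 l * s - const3 m * t"

end

theory Submission
  imports Defs "HOL-Computational_Algebra.Field_as_Ring"
begin


lemma map_poly_der_add:
  fixes D :: "'a::comm_ring_1 \<Rightarrow> 'a"
  assumes "D 0 = 0" "\<And>a b. D (a + b) = D a + D b"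
  shows "map_poly D (p + q) = map_poly D p + map_poly D q"
  by (rule poly_eqI) (simp add: coeff_map_poly assms)

lemma add_hom_sum:
  fixes D :: "'a::comm_monoid_add \<Rightarrow> 'b::comm_monoid_add"
  assumes "D 0 = 0" "\<And>a b. D (a + b) = D a + D b"
  shows "D (sum f A) = (\<Sum>i\<in>A. D (f i))"
  by (induction A rule: infinite_finite_induct) (simp_all add: assms)

lemma map_poly_der_mult:
  fixes D :: "'a::comm_ring_1 \<Rightarrow> 'a"
  assumes D0: "D 0 = 0" and Da: "\<And>a b. D (a + b) = D a + D b"
    and Dm: "\<And>a b. D (a * b) = D a * b + a * D b"
  shows "map_poly D (p * q) = map_poly D p * q + p * map_poly D q"
proof (rule poly_eqI)
  fix n
  have "coeff (map_poly D (p * q)) n = D (\<Sum>i\<le>n. coeff p i * coeff q (n - i))"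
    by (simp add: coeff_map_poly D0 coeff_mult)
  also have "\<dots> = (\<Sum>i\<le>n. D (coeff p i * coeff q (n - i)))"
    by (rule add_hom_sum) (simp_all add: D0 Da)
  also have "\<dots> = (\<Sum>i\<le>n. D (coeff p i) * coeff q (n - i)) + (\<Sum>i\<le>n. coeff p i * D (coeff q (n - i)))"
    by (simp add: Dm sum.distrib)
  also have "\<dots> = coeff (map_poly D p * q + p * map_poly D q) n"
    by (simp add: coeff_mult coeff_map_poly D0)
  finally show "coeff (map_poly D (p * q)) n = coeff (map_poly D p * q + p * map_poly D q) n" .
qed

definition is_der :: "(cpoly3 \<Rightarrow> cpoly3) \<Rightarrow> bool" where
  "is_der D \<longleftrightarrow> (\<forall>p q. D (p + q) = D p + D q) \<and> (\<forall>p q. D (p * q) = D p * q + p * D q)"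

lemma pderiv_der:
  "pderiv (a + b) = pderiv a + pderiv b" "pderiv (a * b) = pderiv a * b + a * pderiv b"
  by (simp_all add: pderiv_add pderiv_mult algebra_simps)

lemma dy_inner_add: "map_poly pderiv (a + b :: complex poly poly) = map_poly pderiv a + map_poly pderiv b"
  by (rule map_poly_der_add) (simp_all add: pderiv_add)
lemma dy_inner_mult: "map_poly pderiv (a * b :: complex poly poly) = map_poly pderiv a * b + a * map_poly pderiv b"
  by (rule map_poly_der_mult) (simp_all add: pderiv_der)

lemma is_der_dx: "is_der dx"
  by (simp add: is_der_def dx_def pderiv_der)
lemma is_der_dy: "is_der dy"
  unfolding is_der_def dy_def
  by (intro conjI allI map_poly_der_add map_poly_der_mult) (simp_all add: pderiv_der)
lemma is_der_dz: "is_der dz"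
  unfolding is_der_def dz_def
  by (intro conjI allI map_poly_der_add map_poly_der_mult) (simp_all add: dy_inner_add dy_inner_mult pderiv_der)


lemma der_add: "is_der D \<Longrightarrow> D (p + q) = D p + D q" by (simp add: is_der_def)
lemma der_mult: "is_der D \<Longrightarrow> D (p * q) = D p * q + p * D q" by (simp add: is_der_def)
lemma der_0: "is_der D \<Longrightarrow> D 0 = 0"
  using der_add[of D 0 0] by simp
lemma der_1: "is_der D \<Longrightarrow> D 1 = 0"
  using der_mult[of D 1 1] by simp
lemma der_uminus: "is_der D \<Longrightarrow> D (- p) = - D p"
  using der_add[of D p "-p"] der_0[of D] by (simp add: eq_neg_iff_add_eq_0 add.commute)
lemma der_diff: "is_der D \<Longrightarrow> D (p - q) = D p - D q"
  using der_add[of D p "-q"] der_uminus[of D q] by simp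
lemma der_power: "is_der D \<Longrightarrow> D (p ^ Suc n) = of_nat (Suc n) * p ^ n * D p"
  by (induction n) (simp_all add: der_mult algebra_simps)
lemma der_power': "is_der D \<Longrightarrow> D (p ^ n) = of_nat n * p ^ (n - 1) * D p"
  by (cases n) (auto simp del: power_Suc simp add: der_power der_1)
lemma der_sum: "is_der D \<Longrightarrow> D (sum f A) = (\<Sum>i\<in>A. D (f i))"
  by (rule add_hom_sum) (simp_all add: der_0 der_add)
lemma der_comb: "is_der D1 \<Longrightarrow> is_der D2 \<Longrightarrow> is_der (\<lambda>p. c1 * D1 p + c2 * D2 p)"
  by (simp add: is_der_def algebra_simps)
lemma der_comb3: "is_der D1 \<Longrightarrow> is_der D2 \<Longrightarrow> is_der D3 \<Longrightarrow>
   is_der (\<lambda>p. c1 * D1 p + c2 * D2 p + c3 * D3 p)"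
  by (simp add: is_der_def algebra_simps)

lemma dx_X: "dx X = 1" and dy_X: "dy X = 0" and dz_X: "dz X = 0"
  and dx_Y: "dx Y = 0" and dy_Y: "dy Y = 1" and dz_Y: "dz Y = 0"
  and dx_Z: "dx Z = 0" and dy_Z: "dy Z = 0" and dz_Z: "dz Z = 1"
  by (simp_all add: dx_def dy_def dz_def X_def Y_def Z_def pderiv_pCons one_pCons map_poly_pCons)

lemma dx_const: "dx [:q:] = 0" and dy_const: "dy [:q:] = [:pderiv q:]"
  and dz_const: "dz [:q:] = [:map_poly pderiv q:]"
  by (simp_all add: dx_def dy_def dz_def pderiv_pCons map_poly_pCons)

lemma const3_alt: "const3 c = [:[:[:c:]:]:]" by (simp add: const3_def)
lemma d_const3: "dx (const3 c) = 0" "dy (const3 c) = 0" "dz (const3 c) = 0"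
  by (simp_all add: const3_def dx_const dy_const dz_const pderiv_pCons map_poly_pCons)

lemma pbr_lin: "pbr s t a b =
   (bzx s t * dz a - bxy s t * dy a) * dx b + (bxy s t * dx a - byz s t * dz a) * dy b
   + (byz s t * dy a - bzx s t * dx a) * dz b"
  by (simp add: pbr_def algebra_simps)

lemma is_der_pbr: "is_der (pbr s t a)"
  unfolding pbr_lin[abs_def] by (rule der_comb3[OF is_der_dx is_der_dy is_der_dz])

lemma pbr_antisym: "pbr s t a b = - pbr s t b a"
  by (simp add: pbr_def algebra_simps)

lemma pbr_X: "pbr s t X p = bxy s t * dy p - bzx s t * dz p"
  and pbr_Y: "pbr s t Y p = byz s t * dz p - bxy s t * dx p"
  and pbr_Z: "pbr s t Z p = bzx s t * dx p - byz s t * dy p"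
  by (simp_all add: pbr_def dx_X dy_X dz_X dx_Y dy_Y dz_Y dx_Z dy_Z dz_Z algebra_simps)

lemma pbr_XY: "pbr s t X Y = bxy s t" and pbr_YZ: "pbr s t Y Z = byz s t"
  and pbr_ZX: "pbr s t Z X = bzx s t"
  by (simp_all add: pbr_X pbr_Y pbr_Z dx_X dy_X dz_X dx_Y dy_Y dz_Y dx_Z dy_Z dz_Z)


lemma mem_principal: "x \<in> principal_ideal u \<longleftrightarrow> u dvd x"
  by (auto simp: principal_ideal_def dvd_def)

lemma const3_mult: "const3 a * const3 b = const3 (a * b)"
  by (simp add: const3_def)
lemma const3_add: "const3 a + const3 b = const3 (a + b)"
  by (simp add: const3_def)
lemma const3_0: "const3 0 = 0" and const3_1: "const3 1 = 1"
  by (simp_all add: const3_def one_pCons)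
lemma const3_of_nat: "of_nat n = const3 (of_nat n)"
  by (simp add: const3_def of_nat_poly)
lemma const3_unit: "c \<noteq> 0 \<Longrightarrow> is_unit (const3 c)"
  by (rule dvdI[of _ _ "const3 (1/c)"]) (simp add: const3_mult const3_1)
lemma const3_eq_0: "const3 c = 0 \<longleftrightarrow> c = 0"
  by (simp add: const3_def)

lemma is_prime_ideal_principal:
  assumes "prime_elem u" shows "is_prime_ideal (principal_ideal u)"
proof -
  have "1 \<notin> principal_ideal u" using assms by (auto simp: mem_principal prime_elem_def)
  then show ?thesis using assms
    by (auto simp: is_prime_ideal_def is_ideal_def mem_principal prime_elem_dvd_mult_iff)
qed

lemma is_prime_ideal_0: "is_prime_ideal ({0} :: cpoly3 set)"
proof -
  have "(1::cpoly3) \<notin> {0}" by simp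
  then have "{0::cpoly3} \<noteq> UNIV" by blast
  then show ?thesis by (auto simp: is_prime_ideal_def is_ideal_def)
qed

lemma poisson_prime_0: "poisson_prime s t {0}"
  by (simp add: poisson_prime_def is_prime_ideal_0 der_0[OF is_der_pbr])

lemma d_fpencil:
  assumes "is_der D" "D (const3 l) = 0" "D (const3 m) = 0"
  shows "D (fpencil s t l m) = const3 l * D s - const3 m * D t"
  by (simp add: fpencil_def der_diff[OF assms(1)] der_mult[OF assms(1)] assms)

lemma pencil_id_l:
  "const3 l * pbr s t a (fpencil s t l m) = fpencil s t l m *
     (- (dz t * (dx a * dy (fpencil s t l m) - dy a * dx (fpencil s t l m))
       + dx t * (dy a * dz (fpencil s t l m) - dz a * dy (fpencil s t l m))
       + dy t * (dz a * dx (fpencil s t l m) - dx a * dz (fpencil s t l m))))"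
  unfolding pbr_def bxy_def byz_def bzx_def
  apply (simp add: d_fpencil is_der_dx is_der_dy is_der_dz d_const3)
  apply (simp add: fpencil_def algebra_simps)
  done

lemma pencil_id_m:
  "const3 m * pbr s t a (fpencil s t l m) = fpencil s t l m *
     (- (dz s * (dx a * dy (fpencil s t l m) - dy a * dx (fpencil s t l m))
       + dx s * (dy a * dz (fpencil s t l m) - dz a * dy (fpencil s t l m))
       + dy s * (dz a * dx (fpencil s t l m) - dx a * dz (fpencil s t l m))))"
  unfolding pbr_def bxy_def byz_def bzx_def
  apply (simp add: d_fpencil is_der_dx is_der_dy is_der_dz d_const3)
  apply (simp add: fpencil_def algebra_simps)
  done


lemma mult_decomp:
  fixes u f :: cpoly3
  assumes "prime_elem u" "u dvd f" "f \<noteq> 0"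
  obtains k g where "k \<ge> 1" "f = u ^ k * g" "\<not> u dvd g"
proof -
  have nu: "\<not> is_unit u" using assms(1) by (simp add: prime_elem_def)
  define N where "N = {n. u ^ n dvd f}"
  have fin: "finite N" unfolding N_def using finite_divisor_powers[OF assms(3) nu] .
  have "1 \<in> N" using assms(2) by (simp add: N_def)
  define k where "k = Max N"
  have kN: "k \<in> N" unfolding k_def using fin \<open>1 \<in> N\<close> by (intro Max_in) auto
  have k1: "k \<ge> 1" unfolding k_def using fin \<open>1 \<in> N\<close> by (simp add: Max_ge)
  have nk: "Suc k \<notin> N"
  proof
    assume "Suc k \<in> N"
    then have "Suc k \<le> k" unfolding k_def using fin by (rule Max_ge[rotated])
    then show False by simp
  qed
  from kN obtain g where g: "f = u ^ k * g" by (auto simp: N_def dvd_def)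
  have "\<not> u dvd g"
  proof
    assume "u dvd g"
    then obtain h where "g = u * h" by (auto simp: dvd_def)
    then have "u ^ Suc k dvd f" using g by (simp add: algebra_simps)
    then show False using nk by (simp add: N_def)
  qed
  then show ?thesis using that k1 g by blast
qed

lemma dvd_pbr_factor:
  assumes pu: "prime_elem u" and uf: "u dvd f" and f0: "f \<noteq> 0" and c0: "c \<noteq> 0"
    and E: "const3 c * pbr s t a f = f * E"
  shows "u dvd pbr s t a u"
proof -
  obtain k g where k: "k \<ge> 1" "f = u ^ k * g" "\<not> u dvd g"
    using mult_decomp[OF pu uf f0] by blast
  have u0: "u \<noteq> 0" using pu by auto
  have D: "is_der (pbr s t a)" by (rule is_der_pbr)
  obtain j where j: "k = Suc j" using k(1) by (cases k) auto
  have P: "pbr s t a (u ^ Suc j) = of_nat (Suc j) * u ^ j * pbr s t a u"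
    by (rule der_power[OF D])
  define C where "C = const3 c * of_nat k * pbr s t a u * g"
  define B where "B = g * E - const3 c * pbr s t a g"
  have pf: "pbr s t a f = of_nat k * u ^ j * pbr s t a u * g + u ^ k * pbr s t a g"
    unfolding k(2) der_mult[OF D] j P by (simp only:)
  have "u ^ j * C = u ^ j * (u * B)"
  proof -
    have "u ^ j * C = const3 c * pbr s t a f - const3 c * (u ^ k * pbr s t a g)"
      unfolding pf C_def by (simp add: algebra_simps)
    also have "\<dots> = u ^ k * g * E - const3 c * (u ^ k * pbr s t a g)"
      using E k(2) by simp
    also have "\<dots> = u ^ j * (u * B)"
      unfolding B_def j by (simp add: algebra_simps)
    finally show ?thesis .
  qed
  then have "C = u * B" using u0 by simp
  then have "u dvd (const3 c * of_nat k) * (g * pbr s t a u)"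
    unfolding C_def by (metis dvd_triv_left mult.commute mult.left_commute)
  moreover have "\<not> u dvd const3 c * of_nat k"
  proof
    assume "u dvd const3 c * of_nat k"
    moreover have "is_unit (const3 c * of_nat k)"
      using c0 k(1) by (simp add: const3_of_nat const3_mult const3_unit)
    ultimately have "is_unit u" using dvd_unit_imp_unit by blast
    then show False using pu by (simp add: prime_elem_def)
  qed
  ultimately show ?thesis using k(3) pu by (simp add: prime_elem_dvd_mult_iff)
qed

lemma principal_poisson:
  assumes pu: "prime_elem u" and hu: "\<And>a. u dvd pbr s t a u"
  shows "poisson_prime s t (principal_ideal u)"
proof -
  have "pbr s t a p \<in> principal_ideal u" if "p \<in> principal_ideal u" for a p
  proof -
    from that obtain q where "p = u * q" by (auto simp: mem_principal dvd_def)
    then have "pbr s t a p = pbr s t a u * q + u * pbr s t a q" by (simp add: der_mult[OF is_der_pbr])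
    then show ?thesis using hu[of a] by (simp add: mem_principal)
  qed
  then show ?thesis using is_prime_ideal_principal[OF pu] by (simp add: poisson_prime_def)
qed

lemma backward3:
  assumes "(l, m) \<noteq> (0, 0)" "fpencil s t l m \<noteq> 0" "irreducible u" "u dvd fpencil s t l m"
  shows "poisson_prime s t (principal_ideal u)"
proof -
  have pu: "prime_elem u" using assms(3) by (simp add: prime_elem_iff_irreducible)
  have "u dvd pbr s t a u" for a
  proof (cases "l = 0")
    case False
    show ?thesis by (rule dvd_pbr_factor[OF pu assms(4) assms(2) False pencil_id_l])
  next
    case True
    then have "m \<noteq> 0" using assms(1) by auto
    then show ?thesis by (rule dvd_pbr_factor[OF pu assms(4) assms(2) _ pencil_id_m])
  qed
  then show ?thesis by (rule principal_poisson[OF pu])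
qed


definition rhom :: "('a::comm_ring_1 \<Rightarrow> 'b::comm_ring_1) \<Rightarrow> bool" where
  "rhom F \<longleftrightarrow> F 0 = 0 \<and> F 1 = 1 \<and> (\<forall>a b. F (a + b) = F a + F b) \<and> (\<forall>a b. F (a * b) = F a * F b)"

lemma map_poly_hom_add:
  assumes "rhom F" shows "map_poly F (p + q) = map_poly F p + map_poly F q"
  using assms by (intro poly_eqI) (simp add: coeff_map_poly rhom_def)

lemma map_poly_hom_mult:
  assumes F: "rhom F" shows "map_poly F (p * q) = map_poly F p * map_poly F q"
proof (rule poly_eqI)
  fix n
  have F0: "F 0 = 0" and Fa: "\<And>a b. F (a + b) = F a + F b" and Fm: "\<And>a b. F (a * b) = F a * F b"
    using F by (auto simp: rhom_def)
  have "coeff (map_poly F (p * q)) n = F (\<Sum>i\<le>n. coeff p i * coeff q (n - i))"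
    by (simp add: coeff_map_poly F0 coeff_mult)
  also have "\<dots> = (\<Sum>i\<le>n. F (coeff p i * coeff q (n - i)))"
    by (rule add_hom_sum) (simp_all add: F0 Fa)
  also have "\<dots> = coeff (map_poly F p * map_poly F q) n"
    by (simp add: coeff_mult coeff_map_poly F0 Fm)
  finally show "coeff (map_poly F (p * q)) n = coeff (map_poly F p * map_poly F q) n" .
qed

lemma rhom_eval:
  assumes F: "rhom F" shows "rhom (\<lambda>p. poly (map_poly F p) v)"
  using F unfolding rhom_def
  by (simp add: map_poly_hom_add[OF F] map_poly_hom_mult[OF F] map_poly_pCons one_pCons)

lemma rhom_const3: "rhom const3"
  by (simp add: rhom_def const3_def one_pCons)

definition ev3 :: "cpoly3 \<Rightarrow> cpoly3 \<Rightarrow> cpoly3 \<Rightarrow> cpoly3 \<Rightarrow> cpoly3" where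
  "ev3 a b c p = poly (map_poly (\<lambda>q. poly (map_poly (\<lambda>r. poly (map_poly const3 r) c) q) b) p) a"

lemma rhom_ev3: "rhom (ev3 a b c)"
  unfolding ev3_def[abs_def] by (intro rhom_eval rhom_const3)

lemma ev3_gens: "ev3 a b c X = a" "ev3 a b c Y = b" "ev3 a b c Z = c" "ev3 a b c (const3 k) = const3 k"
  by (simp_all add: ev3_def X_def Y_def Z_def const3_def map_poly_pCons one_pCons[symmetric])

lemma hom_simps:
  assumes "rhom F"
  shows "F (p + q) = F p + F q" "F (p * q) = F p * F q" "F 0 = 0" "F 1 = 1"
    "F (- p) = - F p" "F (p - q) = F p - F q" "F (p ^ n) = F p ^ n"
proof -
  show a: "F (p + q) = F p + F q" "F (p * q) = F p * F q" "F 0 = 0" "F 1 = 1"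
    using assms by (auto simp: rhom_def)
  have a': "\<And>p q. F (p + q) = F p + F q" using assms by (auto simp: rhom_def)
  have un: "\<And>x. F (- x) = - F x"
  proof -
    fix x
    have "F x + F (- x) = 0" using a'[of x "-x"] a(3) by simp
    then show "F (- x) = - F x" by (simp add: eq_neg_iff_add_eq_0 add.commute)
  qed
  show "F (- p) = - F p" by (rule un)
  show "F (p - q) = F p - F q" using a'[of p "-q"] un[of q] by simp
  show "F (p ^ n) = F p ^ n" using assms by (induction n) (auto simp: rhom_def)
qed

lemma cpoly3_induct:
  fixes Q :: "cpoly3 \<Rightarrow> bool"
  assumes add: "\<And>p q. Q p \<Longrightarrow> Q q \<Longrightarrow> Q (p + q)" and mult: "\<And>p q. Q p \<Longrightarrow> Q q \<Longrightarrow> Q (p * q)"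
    and QX: "Q X" and QY: "Q Y" and QZ: "Q Z" and QC: "\<And>c. Q (const3 c)"
  shows "Q p"
proof -
  have Q0: "Q 0" using QC[of 0] by (simp add: const3_0)
  have 1: "Q [:[:r:]:]" for r
  proof (induction r rule: pCons_induct)
    case 0 then show ?case using Q0 by simp
  next
    case (pCons c r)
    have "[:[:pCons c r:]:] = const3 c + Z * [:[:r:]:]"
      by (simp add: const3_def Z_def)
    then show ?case using add[OF QC mult[OF QZ pCons(2)]] by simp
  qed
  have 2: "Q [:q:]" for q
  proof (induction q rule: pCons_induct)
    case 0 then show ?case using Q0 by simp
  next
    case (pCons r q)
    have "[:pCons r q:] = [:[:r:]:] + Y * [:q:]"
      by (simp add: Y_def)
    then show ?case using add[OF 1 mult[OF QY pCons(2)]] by simp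
  qed
  show "Q p"
  proof (induction p rule: pCons_induct)
    case 0 then show ?case using Q0 by simp
  next
    case (pCons q p)
    have "pCons q p = [:q:] + X * p"
      by (simp add: X_def)
    then show ?case using add[OF 2 mult[OF QX pCons(2)]] by simp
  qed
qed


lemma rhom_comp: "rhom F \<Longrightarrow> rhom G \<Longrightarrow> rhom (\<lambda>p. F (G p))"
  by (simp add: rhom_def)
lemma rhom_id: "rhom (\<lambda>p. p)" by (simp add: rhom_def)

lemma hom_ext:
  fixes F G :: "cpoly3 \<Rightarrow> cpoly3"
  assumes F: "rhom F" and G: "rhom G" and "F X = G X" "F Y = G Y" "F Z = G Z"
    "\<And>c. F (const3 c) = G (const3 c)"
  shows "F p = G p"
  by (rule cpoly3_induct[of "\<lambda>p. F p = G p"]) (simp_all add: hom_simps[OF F] hom_simps[OF G] assms)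

lemma der_transfer:
  fixes F :: "cpoly3 \<Rightarrow> cpoly3"
  assumes D1: "is_der D1" and D2: "is_der D2" and F: "rhom F"
    and "D1 (F X) = F (D2 X)" "D1 (F Y) = F (D2 Y)" "D1 (F Z) = F (D2 Z)"
    "\<And>c. D1 (F (const3 c)) = F (D2 (const3 c))"
  shows "D1 (F p) = F (D2 p)"
  by (rule cpoly3_induct[of "\<lambda>p. D1 (F p) = F (D2 p)"])
     (simp_all add: hom_simps[OF F] der_add[OF D1] der_add[OF D2] der_mult[OF D1] der_mult[OF D2] assms)

definition sxy :: "cpoly3 \<Rightarrow> cpoly3" where "sxy = ev3 Y X Z"
definition sxz :: "cpoly3 \<Rightarrow> cpoly3" where "sxz = ev3 Z Y X"

lemma rhom_sxy: "rhom sxy" and rhom_sxz: "rhom sxz"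
  by (simp_all add: sxy_def sxz_def rhom_ev3)

lemma sxy_gens: "sxy X = Y" "sxy Y = X" "sxy Z = Z" "sxy (const3 c) = const3 c"
  by (simp_all add: sxy_def ev3_gens)
lemma sxz_gens: "sxz X = Z" "sxz Y = Y" "sxz Z = X" "sxz (const3 c) = const3 c"
  by (simp_all add: sxz_def ev3_gens)

lemma sxy_invol: "sxy (sxy p) = p"
  by (rule hom_ext[OF rhom_comp[OF rhom_sxy rhom_sxy] rhom_id]) (simp_all add: sxy_gens)
lemma sxz_invol: "sxz (sxz p) = p"
  by (rule hom_ext[OF rhom_comp[OF rhom_sxz rhom_sxz] rhom_id]) (simp_all add: sxz_gens)

lemmas dgens = dx_X dy_X dz_X dx_Y dy_Y dz_Y dx_Z dy_Z dz_Z d_const3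

lemma sxy_d: "dx (sxy p) = sxy (dy p)" "dy (sxy p) = sxy (dx p)" "dz (sxy p) = sxy (dz p)"
  by (rule der_transfer[OF _ _ rhom_sxy];
      simp add: is_der_dx is_der_dy is_der_dz sxy_gens dgens hom_simps[OF rhom_sxy])+

lemma sxz_d: "dx (sxz p) = sxz (dz p)" "dy (sxz p) = sxz (dy p)" "dz (sxz p) = sxz (dx p)"
  by (rule der_transfer[OF _ _ rhom_sxz];
      simp add: is_der_dx is_der_dy is_der_dz sxz_gens dgens hom_simps[OF rhom_sxz])+

lemma sxy_pbr: "pbr (sxy s) (sxy t) (sxy a) (sxy b) = - sxy (pbr s t a b)"
  unfolding pbr_def bxy_def byz_def bzx_def sxy_d hom_simps[OF rhom_sxy]
  by (simp add: algebra_simps)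

lemma sxz_pbr: "pbr (sxz s) (sxz t) (sxz a) (sxz b) = - sxz (pbr s t a b)"
  unfolding pbr_def bxy_def byz_def bzx_def sxz_d hom_simps[OF rhom_sxz]
  by (simp add: algebra_simps)


locale invol =
  fixes F :: "cpoly3 \<Rightarrow> cpoly3"
  assumes hom: "rhom F" and inv: "\<And>p. F (F p) = p" and const: "\<And>c. F (const3 c) = const3 c"
begin

lemmas hs = hom_simps[OF hom]

lemma img_iff: "p \<in> F ` P \<longleftrightarrow> F p \<in> P"
  by (metis image_iff inv)

lemma inj: "F p = F q \<longleftrightarrow> p = q" by (metis inv)

lemma F_0_iff: "F p = 0 \<longleftrightarrow> p = 0" using inj[of p 0] by (simp add: hs)

lemma dvd_iff: "F a dvd F b \<longleftrightarrow> a dvd b"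
proof
  assume "F a dvd F b"
  then obtain c where "F b = F a * c" by (auto simp: dvd_def)
  then have "F (F b) = F (F a * c)" by simp
  then have "b = a * F c" by (simp add: hs inv)
  then show "a dvd b" by simp
next
  assume "a dvd b"
  then obtain c where "b = a * c" by (auto simp: dvd_def)
  then show "F a dvd F b" by (simp add: hs)
qed

lemma unit_iff: "is_unit (F a) \<longleftrightarrow> is_unit a"
  using dvd_iff[of a 1] by (simp add: hs)

lemma irred: assumes "irreducible a" shows "irreducible (F a)"
proof (rule irreducibleI)
  show "F a \<noteq> 0" using assms by (simp add: F_0_iff irreducible_def)
  show "\<not> is_unit (F a)" using assms by (simp add: unit_iff irreducible_def)
  fix b c assume "F a = b * c"
  then have "a = F b * F c" by (metis hs(2) inv)
  then have "is_unit (F b) \<or> is_unit (F c)" using assms by (simp add: irreducible_def)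
  then show "is_unit b \<or> is_unit c" by (simp add: unit_iff)
qed

lemma principal: "F ` principal_ideal u = principal_ideal (F u)"
proof -
  have "p \<in> F ` principal_ideal u \<longleftrightarrow> p \<in> principal_ideal (F u)" for p
    using dvd_iff[of u "F p"] by (simp add: img_iff mem_principal inv)
  then show ?thesis by blast
qed

lemma prime_ideal: assumes "is_prime_ideal P" shows "is_prime_ideal (F ` P)"
proof -
  have "0 \<in> P" "\<And>a b. a \<in> P \<Longrightarrow> b \<in> P \<Longrightarrow> a + b \<in> P" "\<And>r a. a \<in> P \<Longrightarrow> r * a \<in> P"
    "P \<noteq> UNIV" "\<And>a b. a * b \<in> P \<Longrightarrow> a \<in> P \<or> b \<in> P"
    using assms by (auto simp: is_prime_ideal_def is_ideal_def)
  then show ?thesis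
    unfolding is_prime_ideal_def is_ideal_def img_iff hs
    by (metis img_iff inv UNIV_I subsetI subset_antisym)
qed

lemma fpencil: "F (fpencil s t l m) = fpencil (F s) (F t) l m"
  unfolding fpencil_def hs by (simp add: const)

end

interpretation ixy: invol sxy by standard (simp_all add: rhom_sxy sxy_invol sxy_gens)
interpretation ixz: invol sxz by standard (simp_all add: rhom_sxz sxz_invol sxz_gens)

lemma sxy_poisson: assumes "poisson_prime s t P" shows "poisson_prime (sxy s) (sxy t) (sxy ` P)"
proof -
  have ip: "is_prime_ideal P" and pb: "\<And>a p. p \<in> P \<Longrightarrow> pbr s t a p \<in> P"
    using assms by (auto simp: poisson_prime_def)
  have neg: "\<And>q. q \<in> P \<Longrightarrow> - q \<in> P"
    using ip unfolding is_prime_ideal_def is_ideal_def by (metis mult_minus1)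
  have "pbr (sxy s) (sxy t) a p \<in> sxy ` P" if "p \<in> sxy ` P" for a p
  proof -
    have "sxy p \<in> P" using that by (simp add: ixy.img_iff)
    then have "- pbr s t (sxy a) (sxy p) \<in> P" by (intro neg pb)
    moreover have "pbr (sxy s) (sxy t) a p = - sxy (pbr s t (sxy a) (sxy p))"
      using sxy_pbr[of s t "sxy a" "sxy p"] by (simp add: sxy_invol)
    ultimately show ?thesis by (simp add: ixy.img_iff ixy.hs sxy_invol)
  qed
  then show ?thesis using ixy.prime_ideal[OF ip] by (simp add: poisson_prime_def)
qed

lemma sxz_poisson: assumes "poisson_prime s t P" shows "poisson_prime (sxz s) (sxz t) (sxz ` P)"
proof -
  have ip: "is_prime_ideal P" and pb: "\<And>a p. p \<in> P \<Longrightarrow> pbr s t a p \<in> P"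
    using assms by (auto simp: poisson_prime_def)
  have neg: "\<And>q. q \<in> P \<Longrightarrow> - q \<in> P"
    using ip unfolding is_prime_ideal_def is_ideal_def by (metis mult_minus1)
  have "pbr (sxz s) (sxz t) a p \<in> sxz ` P" if "p \<in> sxz ` P" for a p
  proof -
    have "sxz p \<in> P" using that by (simp add: ixz.img_iff)
    then have "- pbr s t (sxz a) (sxz p) \<in> P" by (intro neg pb)
    moreover have "pbr (sxz s) (sxz t) a p = - sxz (pbr s t (sxz a) (sxz p))"
      using sxz_pbr[of s t "sxz a" "sxz p"] by (simp add: sxz_invol)
    ultimately show ?thesis by (simp add: ixz.img_iff ixz.hs sxz_invol)
  qed
  then show ?thesis using ixz.prime_ideal[OF ip] by (simp add: poisson_prime_def)
qed

lemma sxy_w1: "byz (sxy s) (sxy t) = sxy (bzx s t)"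
  by (simp add: byz_def bzx_def sxy_d ixy.hs)
lemma sxz_w1: "byz (sxz s) (sxz t) = sxz (bxy s t)"
  by (simp add: byz_def bxy_def sxz_d ixz.hs)


lemma smult_conv_mult: "smult a p = [:a:] * p" by simp

context
  fixes s t :: cpoly3 and P :: "cpoly3 set"
  assumes pp: "poisson_prime s t P" and w1: "byz s t \<notin> P"
begin

lemma ip: "is_prime_ideal P" using pp by (simp add: poisson_prime_def)
lemma P0: "0 \<in> P" and Padd: "\<And>a b. a \<in> P \<Longrightarrow> b \<in> P \<Longrightarrow> a + b \<in> P"
  and Pmul: "\<And>r a. a \<in> P \<Longrightarrow> r * a \<in> P" and PU: "P \<noteq> UNIV"
  and Ppr: "\<And>a b. a * b \<in> P \<Longrightarrow> a \<in> P \<or> b \<in> P"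
  using ip by (auto simp: is_prime_ideal_def is_ideal_def)
lemma Pbr: "p \<in> P \<Longrightarrow> pbr s t a p \<in> P" using pp by (simp add: poisson_prime_def)
lemma Pneg: "a \<in> P \<Longrightarrow> - a \<in> P" using Pmul[of a "-1"] by simp
lemma P1: "1 \<notin> P" using Pmul[of 1] PU by (metis UNIV_eq_I mult.right_neutral)

lemma const_notin: "c \<noteq> 0 \<Longrightarrow> const3 c \<notin> P"
  using Pmul[of "const3 c" "const3 (1/c)"] P1 by (auto simp: const3_mult const3_1)

lemma dx0_derivs: assumes "p \<in> P" "dx p = 0" shows "dy p \<in> P" "dz p \<in> P"
proof -
  have "pbr s t Z p \<in> P" using Pbr[OF assms(1)] .
  then have "byz s t * dy p \<in> P" using assms(2) by (simp add: pbr_Z) (metis Pneg minus_minus)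
  then show "dy p \<in> P" using Ppr w1 by blast
  have "pbr s t Y p \<in> P" using Pbr[OF assms(1)] .
  then have "byz s t * dz p \<in> P" using assms(2) by (simp add: pbr_Y)
  then show "dz p \<in> P" using Ppr w1 by blast
qed

lemma inner0: "[:[:r:]:] \<in> P \<Longrightarrow> r = 0"
proof (induction "degree r" arbitrary: r rule: less_induct)
  case less
  show ?case
  proof (cases "degree r = 0")
    case True
    then obtain c where "r = [:c:]" by (metis degree_eq_zeroE)
    then show ?thesis using less.prems const_notin[of c] by (auto simp: const3_def)
  next
    case False
    have "dz [:[:r:]:] \<in> P" by (rule dx0_derivs(2)[OF less.prems]) (simp add: dx_const)
    then have "[:[:pderiv r:]:] \<in> P" by (simp add: dz_const map_poly_pCons)
    moreover have "degree (pderiv r) < degree r" using False by (simp add: degree_pderiv)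
    ultimately have "pderiv r = 0" using less.hyps by blast
    then show ?thesis using False by (simp add: pderiv_eq_0_iff)
  qed
qed

lemma outer0: "[:q:] \<in> P \<Longrightarrow> q = 0"
proof (induction "degree q" arbitrary: q rule: less_induct)
  case less
  show ?case
  proof (cases "degree q = 0")
    case True
    then obtain r where "q = [:r:]" by (metis degree_eq_zeroE)
    then show ?thesis using less.prems inner0 by auto
  next
    case False
    have "dy [:q:] \<in> P" by (rule dx0_derivs(1)[OF less.prems]) (simp add: dx_const)
    then have "[:pderiv q:] \<in> P" by (simp add: dy_const)
    moreover have "degree (pderiv q) < degree q" using False by (simp add: degree_pderiv)
    ultimately have "pderiv q = 0" using less.hyps by blast
    then show ?thesis using False by (simp add: pderiv_eq_0_iff)
  qed
qed

lemma native_principal: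
  assumes nz: "P \<noteq> {0}"
  shows "\<exists>u. prime_elem u \<and> degree u \<ge> 1 \<and> P = principal_ideal u"
proof -
  have ex: "\<exists>p. p \<in> P \<and> p \<noteq> 0" using nz P0 by blast
  define d where "d = (LEAST n. \<exists>p. p \<in> P \<and> p \<noteq> 0 \<and> degree p = n)"
  have "\<exists>p. p \<in> P \<and> p \<noteq> 0 \<and> degree p = d"
  proof -
    from ex obtain p0 where "p0 \<in> P" "p0 \<noteq> 0" by blast
    then show ?thesis unfolding d_def
      by (intro LeastI[where P="\<lambda>n. \<exists>p. p \<in> P \<and> p \<noteq> 0 \<and> degree p = n" and k="degree p0"]) blast
  qed
  then obtain u0 where u0: "u0 \<in> P" "u0 \<noteq> 0" "degree u0 = d" by blast
  have dmin: "d \<le> degree p" if "p \<in> P" "p \<noteq> 0" for p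
    unfolding d_def using that by (intro Least_le) blast
  have d1: "d \<ge> 1"
  proof (rule ccontr)
    assume "\<not> d \<ge> 1"
    then have "degree u0 = 0" using u0 by simp
    then obtain q where "u0 = [:q:]" by (metis degree_eq_zeroE)
    then show False using u0 outer0 by auto
  qed
  define u where "u = primitive_part u0"
  have u0u: "u0 = [:content u0:] * u" unfolding u_def
    by (metis content_times_primitive_part smult_conv_mult)
  have "[:content u0:] \<notin> P"
  proof
    assume "[:content u0:] \<in> P"
    then have "content u0 = 0" by (rule outer0)
    then show False using u0(2) by simp
  qed
  then have uP: "u \<in> P" using Ppr[of "[:content u0:]" u] u0(1) u0u by simp
  have u_ne: "u \<noteq> 0" using u0(2) by (simp add: u_def)
  have du: "degree u = d" using u0(3) by (simp add: u_def)
  have cu: "content u = 1" using u0(2) by (simp add: u_def)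
  have irr: "irreducible u"
  proof (rule irreducibleI)
    show "u \<noteq> 0" by fact
    show "\<not> is_unit u"
    proof
      assume "is_unit u"
      then obtain v where "1 = u * v" by (auto simp: dvd_def)
      then show False using Pmul[OF uP, of v] P1 by (simp add: mult.commute)
    qed
    fix a b assume ab: "u = a * b"
    have nab: "a \<noteq> 0" "b \<noteq> 0" using u_ne ab by auto
    have deg: "degree u = degree a + degree b" using ab nab by (simp add: degree_mult_eq)
    have unit_of: "is_unit c" if dc: "degree c = 0" and cdv: "c dvd u" for c
    proof -
      obtain k where "c = [:k:]" using dc by (rule degree_eq_zeroE)
      then have "[:k:] dvd u" using cdv by simp
      then have "k dvd content u" by (simp only: const_poly_dvd_iff_dvd_content)
      then have "is_unit k" using cu by simp
      then show ?thesis using \<open>c = [:k:]\<close> by (simp add: is_unit_poly_iff)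
    qed
    from Ppr[of a b] uP ab have "a \<in> P \<or> b \<in> P" by simp
    then show "is_unit a \<or> is_unit b"
    proof
      assume "a \<in> P"
      then have "degree a \<ge> d" using dmin nab by blast
      then have "degree b = 0" using deg du by simp
      then show ?thesis using unit_of[of b] ab by simp
    next
      assume "b \<in> P"
      then have "degree b \<ge> d" using dmin nab by blast
      then have "degree a = 0" using deg du by simp
      then show ?thesis using unit_of[of a] ab by simp
    qed
  qed
  have pu: "prime_elem u" using irr by (simp add: prime_elem_iff_irreducible)
  have "P = principal_ideal u"
  proof (intro set_eqI iffI)
    fix p assume pP: "p \<in> P"
    obtain a q where aq: "a \<noteq> 0" "smult a p = u * q + pseudo_mod p u"
      using pseudo_mod(1)[OF u_ne, of p] by blast
    have r: "pseudo_mod p u = 0 \<or> degree (pseudo_mod p u) < degree u"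
      using pseudo_mod(2)[OF u_ne] by blast
    have e: "pseudo_mod p u = [:a:] * p + (- q) * u" using aq(2) by (simp only: smult_conv_mult) simp
    have "[:a:] * p \<in> P" using Pmul pP by blast
    moreover have "(- q) * u \<in> P" using Pmul uP by blast
    ultimately have rP: "pseudo_mod p u \<in> P" unfolding e by (rule Padd)
    have "pseudo_mod p u = 0"
    proof (rule ccontr)
      assume "pseudo_mod p u \<noteq> 0"
      then have "d \<le> degree (pseudo_mod p u)" using dmin rP by blast
      then show False using r du \<open>pseudo_mod p u \<noteq> 0\<close> by simp
    qed
    then have "u dvd smult a p" using aq(2) by simp
    then have "u dvd [:a:] * p" by (simp only: smult_conv_mult)
    moreover have "\<not> u dvd [:a:]"
    proof
      assume "u dvd [:a:]"
      then have "degree u \<le> degree [:a:]" using aq(1) by (intro dvd_imp_degree_le) auto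
      then show False using du d1 by simp
    qed
    ultimately have "u dvd p" using pu prime_elem_dvd_mult_iff[of u "[:a:]" p] by blast
    then show "p \<in> principal_ideal u" by (simp add: mem_principal)
  next
    fix p assume "p \<in> principal_ideal u"
    then obtain q where "p = q * u" by (auto simp: mem_principal dvd_def mult.commute)
    then show "p \<in> P" using Pmul uP by simp
  qed
  then show ?thesis using pu du d1 by blast
qed

end


lemma smult_cancel_left:
  fixes p q :: "'a::idom poly"
  assumes "smult c p = smult c q" "c \<noteq> 0" shows "p = q"
proof -
  have "smult c (p - q) = 0" using assms(1) by (simp add: smult_diff_right)
  then show ?thesis using assms(2) by simp
qed

lemma lc_pderiv:
  fixes a :: "'a::{idom,ring_char_0} poly"
  shows "lead_coeff (pderiv a) = of_nat (degree a) * lead_coeff a"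
proof (cases "degree a = 0")
  case True then show ?thesis by (simp add: pderiv_eq_0_iff)
next
  case False
  then have "Suc (degree a - 1) = degree a" by simp
  then show ?thesis by (simp add: degree_pderiv coeff_pderiv)
qed

lemma deg_eq_of_wronsk:
  fixes a b :: "'a::{idom,ring_char_0} poly"
  assumes a0: "a \<noteq> 0" and b0: "b \<noteq> 0" and w: "b * pderiv a = a * pderiv b"
  shows "degree a = degree b"
proof (cases "degree a = 0 \<or> degree b = 0")
  case True
  then show ?thesis
  proof
    assume "degree a = 0"
    then have "pderiv a = 0" by (simp add: pderiv_eq_0_iff)
    then have "pderiv b = 0" using w a0 by simp
    then show ?thesis using \<open>degree a = 0\<close> by (simp add: pderiv_eq_0_iff)
  next
    assume "degree b = 0"
    then have "pderiv b = 0" by (simp add: pderiv_eq_0_iff)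
    then have "pderiv a = 0" using w b0 by simp
    then show ?thesis using \<open>degree b = 0\<close> by (simp add: pderiv_eq_0_iff)
  qed
next
  case False
  have "lead_coeff (b * pderiv a) = lead_coeff (a * pderiv b)" using w by simp
  then have "lead_coeff b * (of_nat (degree a) * lead_coeff a) = lead_coeff a * (of_nat (degree b) * lead_coeff b)"
    by (simp add: lead_coeff_mult lc_pderiv)
  then have "(lead_coeff a * lead_coeff b) * of_nat (degree a) = (lead_coeff a * lead_coeff b) * of_nat (degree b)"
    by (simp add: algebra_simps)
  moreover have "lead_coeff a * lead_coeff b \<noteq> 0" using a0 b0 by simp
  ultimately have "(of_nat (degree a) :: 'a) = of_nat (degree b)" by simp
  then show ?thesis by simp
qed

lemma wronsk1:
  fixes a b :: "'a::{idom,ring_char_0} poly"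
  assumes b0: "b \<noteq> 0" and w: "b * pderiv a = a * pderiv b"
  shows "smult (lead_coeff b) a = smult (lead_coeff a) b"
proof (cases "a = 0")
  case True then show ?thesis by simp
next
  case a0: False
  define g where "g = smult (lead_coeff b) a - smult (lead_coeff a) b"
  have wg: "b * pderiv g = g * pderiv b"
    unfolding g_def by (simp add: pderiv_diff pderiv_smult algebra_simps w)
  have da: "degree a = degree b" by (rule deg_eq_of_wronsk[OF a0 b0 w])
  show ?thesis
  proof (rule ccontr)
    assume "\<not> ?thesis"
    then have g0: "g \<noteq> 0" by (simp add: g_def)
    have dg: "degree g = degree b" by (rule deg_eq_of_wronsk[OF g0 b0 wg])
    have "coeff g (degree b) = 0" unfolding g_def using da by (simp add: algebra_simps)
    then show False using g0 dg by (metis leading_coeff_0_iff)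
  qed
qed

lemma dyi_smult: "map_poly pderiv (smult (c::complex poly) a) = smult (pderiv c) a + smult c (map_poly pderiv a)"
proof -
  have "map_poly pderiv ([:c:] * a) = map_poly pderiv [:c:] * a + [:c:] * map_poly pderiv a"
    by (rule dy_inner_mult)
  then show ?thesis by (simp add: map_poly_pCons)
qed

lemma wronsk2:
  fixes a b :: "complex poly poly"
  assumes b0: "b \<noteq> 0" and w1: "b * pderiv a = a * pderiv b"
    and w2: "b * map_poly pderiv a = a * map_poly pderiv b"
  shows "\<exists>c. a = smult [:c:] b"
proof -
  define \<alpha> where "\<alpha> = lead_coeff a"
  define \<beta> where "\<beta> = lead_coeff b"
  have e: "smult \<beta> a = smult \<alpha> b" unfolding \<alpha>_def \<beta>_def by (rule wronsk1[OF b0 w1])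
  have \<beta>0: "\<beta> \<noteq> 0" using b0 by (simp add: \<beta>_def)
  have "map_poly pderiv (smult \<beta> a) = map_poly pderiv (smult \<alpha> b)" using e by simp
  then have e2: "smult (pderiv \<beta>) a + smult \<beta> (map_poly pderiv a) = smult (pderiv \<alpha>) b + smult \<alpha> (map_poly pderiv b)"
    by (simp add: dyi_smult)
  have "b * (smult (pderiv \<beta>) a + smult \<beta> (map_poly pderiv a)) = b * (smult (pderiv \<alpha>) b + smult \<alpha> (map_poly pderiv b))"
    using e2 by simp
  then have "smult (pderiv \<beta>) (b * a) + smult \<beta> (a * map_poly pderiv b) = smult (pderiv \<alpha>) (b * b) + smult \<alpha> (b * map_poly pderiv b)"
    using w2 by (simp add: algebra_simps)
  moreover have "smult \<beta> (a * map_poly pderiv b) = smult \<alpha> (b * map_poly pderiv b)"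
    using e by (metis mult_smult_left)
  ultimately have "smult (pderiv \<beta>) (b * a) = smult (pderiv \<alpha>) (b * b)" by simp
  then have "b * (smult (pderiv \<beta>) a - smult (pderiv \<alpha>) b) = 0" by (simp add: algebra_simps)
  then have e3: "smult (pderiv \<beta>) a = smult (pderiv \<alpha>) b" using b0 by simp
  have "smult (pderiv \<beta> * \<alpha>) b = smult (\<beta> * pderiv \<alpha>) b"
  proof -
    have "smult (pderiv \<beta> * \<alpha>) b = smult (pderiv \<beta>) (smult \<alpha> b)" by simp
    also have "\<dots> = smult (pderiv \<beta>) (smult \<beta> a)" using e by simp
    also have "\<dots> = smult \<beta> (smult (pderiv \<beta>) a)" by (simp add: mult.commute)
    also have "\<dots> = smult (\<beta> * pderiv \<alpha>) b" using e3 by simp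
    finally show ?thesis .
  qed
  then have "smult (pderiv \<beta> * \<alpha> - \<beta> * pderiv \<alpha>) b = 0" by (simp add: smult_diff_left)
  then have "\<beta> * pderiv \<alpha> = \<alpha> * pderiv \<beta>" using b0 by (simp add: mult.commute)
  then have e4: "smult (lead_coeff \<beta>) \<alpha> = smult (lead_coeff \<alpha>) \<beta>" by (rule wronsk1[OF \<beta>0])
  define c where "c = lead_coeff \<alpha> / lead_coeff \<beta>"
  have "\<alpha> = smult c \<beta>"
  proof -
    have "smult (lead_coeff \<beta>) \<alpha> = smult (lead_coeff \<beta>) (smult c \<beta>)"
      using e4 \<beta>0 by (simp add: c_def)
    moreover have "lead_coeff \<beta> \<noteq> 0" using \<beta>0 by simp
    ultimately show ?thesis by (rule smult_cancel_left)
  qed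
  then have "smult \<beta> a = smult \<beta> (smult [:c:] b)" using e by (simp add: mult.commute)
  then have "a = smult [:c:] b" using \<beta>0 by (rule smult_cancel_left)
  then show ?thesis by blast
qed


definition homog :: "cpoly3 \<Rightarrow> cpoly3 \<Rightarrow> nat \<Rightarrow> complex poly \<Rightarrow> cpoly3" where
  "homog s t k g = (\<Sum>j\<le>k. const3 (coeff g j) * s ^ j * t ^ (k - j))"

lemma homog_add: "homog s t k (g + h) = homog s t k g + homog s t k h"
  by (simp add: homog_def sum.distrib const3_add[symmetric] algebra_simps)

lemma homog_smult: "homog s t k (smult c g) = const3 c * homog s t k g"
  by (simp add: homog_def sum_distrib_left const3_mult[symmetric] algebra_simps)

lemma homog_shift: "homog s t (Suc n) (pCons 0 h) = s * homog s t n h"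
  unfolding homog_def
  by (subst sum.atMost_Suc_shift) (simp add: const3_0 sum_distrib_left algebra_simps)

lemma homog_up: assumes "coeff h (Suc n) = 0" shows "homog s t (Suc n) h = t * homog s t n h"
proof -
  have "homog s t (Suc n) h = (\<Sum>j\<le>n. const3 (coeff h j) * s ^ j * t ^ (Suc n - j))"
    unfolding homog_def by (simp add: assms const3_0)
  also have "\<dots> = (\<Sum>j\<le>n. t * (const3 (coeff h j) * s ^ j * t ^ (n - j)))"
    by (intro sum.cong refl) (simp add: Suc_diff_le algebra_simps)
  finally show ?thesis by (simp add: homog_def sum_distrib_left)
qed

lemma homog_0: "homog s t 0 h = const3 (coeff h 0)" by (simp add: homog_def)

lemma root_lemma:
  assumes pu: "prime_elem u"
  shows "degree g = k \<Longrightarrow> k \<ge> 1 \<Longrightarrow> u dvd homog s t k g \<Longrightarrow> \<exists>r. u dvd s - const3 r * t"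
proof (induction k arbitrary: g)
  case 0 then show ?case by simp
next
  case (Suc n)
  have "\<not> constant (poly g)" using Suc.prems(1) by (simp add: constant_degree)
  then obtain r where "poly g r = 0" using fundamental_theorem_of_algebra by blast
  then obtain h where gh: "g = [:-r, 1:] * h" by (metis poly_eq_0_iff_dvd dvdE)
  have g0: "g \<noteq> 0" using Suc.prems(1) by auto
  then have h0: "h \<noteq> 0" using gh by auto
  have "degree g = degree [:-r, 1:] + degree h"
    unfolding gh by (rule degree_mult_eq) (use h0 in auto)
  then have dh: "degree h = n" using Suc.prems(1) by simp
  have ch: "coeff h (Suc n) = 0" using dh by (simp add: coeff_eq_0)
  have gg: "g = smult (- r) h + pCons 0 h" using gh by simp
  have "homog s t (Suc n) g = const3 (- r) * (t * homog s t n h) + s * homog s t n h"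
    by (simp only: gg homog_add homog_smult homog_shift homog_up[OF ch])
  also have "\<dots> = (s - const3 r * t) * homog s t n h"
  proof -
    have "const3 (- r) = - const3 r" by (simp add: const3_def)
    then show ?thesis by (simp add: algebra_simps)
  qed
  finally have "u dvd (s - const3 r * t) * homog s t n h" using Suc.prems(3) by simp
  then have "u dvd s - const3 r * t \<or> u dvd homog s t n h" using pu by (simp add: prime_elem_dvd_mult_iff)
  then show ?case
  proof
    assume a: "u dvd homog s t n h"
    show ?case
    proof (cases "n = 0")
      case True
      then have "coeff h 0 \<noteq> 0" using dh h0 by (metis leading_coeff_0_iff)
      then have "is_unit (homog s t n h)" using True by (simp add: homog_0 const3_unit)
      then have "is_unit u" using a dvd_unit_imp_unit by blast
      then show ?thesis using pu by (simp add: prime_elem_def)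
    next
      case False
      then show ?thesis using Suc.IH[OF dh] a by simp
    qed
  qed blast
qed

lemma lin_dep:
  fixes r :: "nat \<Rightarrow> 'a::idom poly"
  shows "finite J \<Longrightarrow> card J > n \<Longrightarrow> (\<forall>j\<in>J. \<forall>m\<ge>n. coeff (r j) m = 0) \<Longrightarrow>
    \<exists>b. (\<exists>j\<in>J. b j \<noteq> 0) \<and> (\<Sum>j\<in>J. smult (b j) (r j)) = 0"
proof (induction n arbitrary: J r)
  case 0
  then obtain j where "j \<in> J" by (metis card.empty ex_in_conv less_irrefl)
  have "\<forall>j\<in>J. r j = 0" using "0.prems"(3) by (auto intro: poly_eqI)
  then show ?case using \<open>j \<in> J\<close> by (intro exI[of _ "\<lambda>_. 1"]) auto
next
  case (Suc n)
  show ?case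
  proof (cases "\<forall>j\<in>J. coeff (r j) n = 0")
    case True
    have "\<forall>j\<in>J. \<forall>m\<ge>n. coeff (r j) m = 0"
      using True Suc.prems(3) by (metis Suc_leI le_neq_implies_less)
    then show ?thesis using Suc.IH[OF Suc.prems(1)] Suc.prems(2) by simp
  next
    case False
    then obtain i where iJ: "i \<in> J" and ci: "coeff (r i) n \<noteq> 0" by blast
    define c where "c = coeff (r i) n"
    define J' where "J' = J - {i}"
    define r' where "r' = (\<lambda>j. smult c (r j) - smult (coeff (r j) n) (r i))"
    have fJ': "finite J'" using Suc.prems(1) by (simp add: J'_def)
    have cJ': "card J' > n" using Suc.prems(1,2) iJ by (simp add: J'_def card_Diff_singleton)
    have "\<forall>j\<in>J'. \<forall>m\<ge>n. coeff (r' j) m = 0"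
    proof (intro ballI allI impI)
      fix j m assume j: "j \<in> J'" and m: "m \<ge> n"
      show "coeff (r' j) m = 0"
      proof (cases "m = n")
        case True then show ?thesis by (simp add: r'_def c_def)
      next
        case False
        then have "m \<ge> Suc n" using m by simp
        then show ?thesis using Suc.prems(3) j iJ by (simp add: r'_def J'_def)
      qed
    qed
    then obtain b' where b': "\<exists>j\<in>J'. b' j \<noteq> 0" "(\<Sum>j\<in>J'. smult (b' j) (r' j)) = 0"
      using Suc.IH[OF fJ' cJ'] by blast
    define b where "b = (\<lambda>j. if j = i then - (\<Sum>k\<in>J'. b' k * coeff (r k) n) else c * b' j)"
    have "(\<Sum>j\<in>J. smult (b j) (r j)) = smult (b i) (r i) + (\<Sum>j\<in>J'. smult (b j) (r j))"
      unfolding J'_def using Suc.prems(1) iJ by (simp add: sum.remove)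
    also have "(\<Sum>j\<in>J'. smult (b j) (r j)) = (\<Sum>j\<in>J'. smult (c * b' j) (r j))"
      by (intro sum.cong refl) (simp add: b_def J'_def)
    also have "smult (b i) (r i) = - (\<Sum>k\<in>J'. smult (b' k * coeff (r k) n) (r i))"
      by (simp add: b_def smult_sum)
    also have "- (\<Sum>k\<in>J'. smult (b' k * coeff (r k) n) (r i)) + (\<Sum>j\<in>J'. smult (c * b' j) (r j))
        = (\<Sum>j\<in>J'. smult (b' j) (r' j))"
      by (simp add: r'_def smult_diff_right sum_subtractf algebra_simps)
    finally have "(\<Sum>j\<in>J. smult (b j) (r j)) = 0" using b'(2) by simp
    moreover have "\<exists>j\<in>J. b j \<noteq> 0"
    proof -
      from b'(1) obtain j where "j \<in> J'" "b' j \<noteq> 0" by blast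
      then show ?thesis using ci by (intro bexI[of _ j]) (auto simp: b_def J'_def c_def)
    qed
    ultimately show ?thesis by blast
  qed
qed


definition rel :: "cpoly3 \<Rightarrow> cpoly3 \<Rightarrow> nat \<Rightarrow> (nat \<Rightarrow> complex poly poly) \<Rightarrow> cpoly3" where
  "rel s t k a = (\<Sum>j\<le>k. [:a j:] * s ^ j * t ^ (k - j))"

lemma der_mon_id:
  assumes E: "is_der E"
  shows "t * E (s ^ j * t ^ i) = of_nat (j + i) * E t * (s ^ j * t ^ i)
            + of_nat j * s ^ (j - 1) * t ^ i * (t * E s - s * E t)"
proof (cases j)
  case 0
  then show ?thesis
  proof (cases i)
    case 0 then show ?thesis using \<open>j = 0\<close> by (simp add: der_1[OF E])
  next
    case (Suc i')
    have "E (t ^ Suc i') = of_nat (Suc i') * t ^ i' * E t" by (rule der_power[OF E])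
    then show ?thesis using \<open>j = 0\<close> Suc by (simp add: algebra_simps)
  qed
next
  case (Suc j')
  have ps: "E (s ^ Suc j') = of_nat (Suc j') * s ^ j' * E s" by (rule der_power[OF E])
  show ?thesis
  proof (cases i)
    case 0 then show ?thesis using Suc ps by (simp add: algebra_simps)
  next
    case (Suc i')
    have pt: "E (t ^ Suc i') = of_nat (Suc i') * t ^ i' * E t" by (rule der_power[OF E])
    have m: "E (s ^ Suc j' * t ^ Suc i') = (of_nat (Suc j') * s ^ j' * E s) * t ^ Suc i' + s ^ Suc j' * (of_nat (Suc i') * t ^ i' * E t)"
      by (simp only: der_mult[OF E] ps pt)
    show ?thesis unfolding \<open>j = Suc j'\<close> Suc m by (simp add: algebra_simps)
  qed
qed

lemma der_prod_aux: "is_der E \<Longrightarrow> t * E (A * M) = t * E A * M + A * (t * E M)"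
  by (simp add: der_mult algebra_simps)

lemma key_step:
  assumes E: "is_der E" and Eu: "E u = 0" and EC: "\<And>q. E [:q:] = ux * [:D q:]"
    and G: "u dvd t * E s - s * E t" and pu: "prime_elem u" and nt: "\<not> u dvd t" and nux: "\<not> u dvd ux"
    and R: "u dvd rel s t k a"
  shows "u dvd rel s t k (\<lambda>j. D (a j))"
proof -
  define Gv where "Gv = t * E s - s * E t"
  define S where "S = (\<Sum>j\<le>k. [:a j:] * (of_nat j * s ^ (j - 1) * t ^ (k - j)))"
  have trm: "t * E ([:a j:] * s ^ j * t ^ (k - j)) = t * ux * ([:D (a j):] * s ^ j * t ^ (k - j))
      + of_nat k * E t * ([:a j:] * s ^ j * t ^ (k - j)) + Gv * ([:a j:] * (of_nat j * s ^ (j - 1) * t ^ (k - j)))"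
    if "j \<le> k" for j
  proof -
    have "t * E ([:a j:] * s ^ j * t ^ (k - j)) = t * E [:a j:] * (s ^ j * t ^ (k - j)) + [:a j:] * (t * E (s ^ j * t ^ (k - j)))"
      unfolding mult.assoc[of "[:a j:]"] by (rule der_prod_aux[OF E])
    also have "t * E (s ^ j * t ^ (k - j)) = of_nat (j + (k - j)) * E t * (s ^ j * t ^ (k - j))
            + of_nat j * s ^ (j - 1) * t ^ (k - j) * Gv"
      unfolding Gv_def by (rule der_mon_id[OF E])
    also have "j + (k - j) = k" using that by simp
    finally show ?thesis by (simp add: EC algebra_simps)
  qed
  have "t * E (rel s t k a) = (\<Sum>j\<le>k. t * E ([:a j:] * s ^ j * t ^ (k - j)))"
    by (simp add: rel_def der_sum[OF E] sum_distrib_left)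
  also have "\<dots> = (\<Sum>j\<le>k. t * ux * ([:D (a j):] * s ^ j * t ^ (k - j))
      + of_nat k * E t * ([:a j:] * s ^ j * t ^ (k - j)) + Gv * ([:a j:] * (of_nat j * s ^ (j - 1) * t ^ (k - j))))"
    by (intro sum.cong refl trm) simp
  also have "\<dots> = t * ux * rel s t k (\<lambda>j. D (a j)) + of_nat k * E t * rel s t k a + Gv * S"
    by (simp add: rel_def S_def sum.distrib sum_distrib_left)
  finally have eq: "t * E (rel s t k a) = t * ux * rel s t k (\<lambda>j. D (a j)) + of_nat k * E t * rel s t k a + Gv * S" .
  from R obtain q where q: "rel s t k a = u * q" by (auto simp: dvd_def)
  have "E (rel s t k a) = u * E q" unfolding q by (simp add: der_mult[OF E] Eu)
  then have "u dvd t * E (rel s t k a)" by simp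
  moreover have "u dvd of_nat k * E t * rel s t k a" using R by simp
  moreover have "u dvd Gv * S" using G by (simp add: Gv_def)
  ultimately have "u dvd t * ux * rel s t k (\<lambda>j. D (a j))"
    unfolding eq by (metis dvd_add_left_iff dvd_add_right_iff)
  then show ?thesis using pu nt nux by (simp add: prime_elem_dvd_mult_iff)
qed


lemma rel_top:
  assumes "j0 \<le> k" "\<And>j. j0 < j \<Longrightarrow> j \<le> k \<Longrightarrow> a j = 0"
  shows "rel s t k a = t ^ (k - j0) * rel s t j0 a"
proof -
  have "rel s t k a = (\<Sum>j\<le>j0. [:a j:] * s ^ j * t ^ (k - j))"
    unfolding rel_def using assms by (intro sum.mono_neutral_right) auto
  also have "\<dots> = (\<Sum>j\<le>j0. t ^ (k - j0) * ([:a j:] * s ^ j * t ^ (j0 - j)))"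
  proof (intro sum.cong refl)
    fix j assume "j \<in> {..j0}"
    then have "k - j = (k - j0) + (j0 - j)" using assms(1) by simp
    then show "[:a j:] * s ^ j * t ^ (k - j) = t ^ (k - j0) * ([:a j:] * s ^ j * t ^ (j0 - j))"
      by (simp only: power_add mult_ac)
  qed
  finally show ?thesis by (simp add: rel_def sum_distrib_left)
qed

lemma rel_lin: "rel s t k (\<lambda>j. x * a j - y * b j) = [:x:] * rel s t k a - [:y:] * rel s t k b"
proof -
  have "rel s t k (\<lambda>j. x * a j - y * b j) = (\<Sum>j\<le>k. [:x:] * ([:a j:] * s^j * t^(k-j)) - [:y:] * ([:b j:] * s^j * t^(k-j)))"
    unfolding rel_def by (intro sum.cong refl) (simp add: algebra_simps smult_diff_left)
  then show ?thesis by (simp only: sum_subtractf sum_distrib_left rel_def)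
qed

lemma rel_0: "rel s t 0 a = [:a 0:]" by (simp add: rel_def)

lemma not_dvd_const:
  fixes u :: cpoly3
  assumes "degree u \<ge> 1" "q \<noteq> 0" shows "\<not> u dvd [:q:]"
proof
  assume "u dvd [:q:]"
  then have "degree u \<le> degree [:q:]" using assms(2) by (intro dvd_imp_degree_le) auto
  then show False using assms(1) by simp
qed


lemma top_exists:
  assumes pu: "prime_elem u" and nt: "\<not> u dvd t" and R: "u dvd rel s t k a" and ex: "\<exists>j\<le>k. a j \<noteq> 0"
  shows "\<exists>j0\<le>k. a j0 \<noteq> 0 \<and> u dvd rel s t j0 a"
proof -
  define Pr where "Pr = (\<lambda>j. j \<le> k \<and> a j \<noteq> 0)"
  define j0 where "j0 = (GREATEST j. Pr j)"
  from ex obtain j1 where j1: "Pr j1" by (auto simp: Pr_def)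
  have bd: "\<And>y. Pr y \<Longrightarrow> y \<le> k" by (simp add: Pr_def)
  have Pj0: "Pr j0" unfolding j0_def using j1 bd by (rule GreatestI_nat)
  have gr: "a j = 0" if "j0 < j" "j \<le> k" for j
  proof (rule ccontr)
    assume "a j \<noteq> 0"
    then have "Pr j" using that by (simp add: Pr_def)
    then have "j \<le> j0" unfolding j0_def using bd by (rule Greatest_le_nat)
    then show False using that by simp
  qed
  have "rel s t k a = t ^ (k - j0) * rel s t j0 a"
    by (rule rel_top) (use Pj0 gr in \<open>auto simp: Pr_def\<close>)
  then have "u dvd t ^ (k - j0) * rel s t j0 a" using R by simp
  moreover have "\<not> u dvd t ^ (k - j0)" using nt pu prime_elem_dvd_power by blast
  ultimately have "u dvd rel s t j0 a" using pu by (simp add: prime_elem_dvd_mult_iff)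
  then show ?thesis using Pj0 by (auto simp: Pr_def)
qed

lemma pencil_zero:
  assumes "fpencil s t l m = 0" "(l, m) \<noteq> (0, 0)"
  shows "byz s t = 0 \<and> bzx s t = 0 \<and> bxy s t = 0"
proof (cases "l = 0")
  case True
  then have "m \<noteq> 0" using assms(2) by simp
  have "const3 m * t = 0" using assms(1) True by (simp add: fpencil_def const3_0)
  then have "t = 0" using \<open>m \<noteq> 0\<close> by (simp add: const3_eq_0)
  then show ?thesis by (simp add: byz_def bzx_def bxy_def der_0[OF is_der_dx] der_0[OF is_der_dy] der_0[OF is_der_dz])
next
  case False
  define c where "c = m / l"
  have "const3 l * s = const3 m * t" using assms(1) by (simp add: fpencil_def)
  then have "const3 (1/l) * (const3 l * s) = const3 (1/l) * (const3 m * t)" by simp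
  then have sc: "s = const3 c * t" using False by (simp add: mult.assoc[symmetric] const3_mult const3_1 c_def)
  have "D s = const3 c * D t" if "is_der D" "D (const3 c) = 0" for D
    unfolding sc der_mult[OF that(1)] that(2) by simp
  then have "dx s = const3 c * dx t" "dy s = const3 c * dy t" "dz s = const3 c * dz t"
    by (simp_all add: is_der_dx is_der_dy is_der_dz d_const3)
  then show ?thesis by (simp add: byz_def bzx_def bxy_def sc algebra_simps)
qed


lemma native_pencil:
  assumes pu: "prime_elem u" and du: "degree u \<ge> 1" and hP: "\<And>a. u dvd pbr s t a u"
    and hw: "\<not> (u dvd byz s t \<and> u dvd bzx s t \<and> u dvd bxy s t)"
  shows "\<exists>l m. (l, m) \<noteq> (0, 0) \<and> fpencil s t l m \<noteq> 0 \<and> \<not> is_unit (fpencil s t l m)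
                \<and> u dvd fpencil s t l m"
proof -
  have ok: "\<exists>l m. (l, m) \<noteq> (0, 0) \<and> fpencil s t l m \<noteq> 0 \<and> \<not> is_unit (fpencil s t l m)
                \<and> u dvd fpencil s t l m" if lm: "(l, m) \<noteq> (0, 0)" and ud: "u dvd fpencil s t l m" for l m
  proof -
    have "fpencil s t l m \<noteq> 0"
    proof
      assume "fpencil s t l m = 0"
      then have "byz s t = 0 \<and> bzx s t = 0 \<and> bxy s t = 0" using lm by (rule pencil_zero)
      then show False using hw by simp
    qed
    moreover have "\<not> is_unit (fpencil s t l m)"
    proof
      assume "is_unit (fpencil s t l m)"
      then have "is_unit u" using ud dvd_unit_imp_unit by blast
      then show False using pu by (simp add: prime_elem_def)
    qed
    ultimately show ?thesis using lm ud by blast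
  qed
  show ?thesis
  proof (cases "u dvd t")
    case True
    have "fpencil s t 0 1 = - t" by (simp add: fpencil_def const3_0 const3_1)
    then show ?thesis using ok[of 0 1] True by simp
  next
    case nt: False
    have u0: "u \<noteq> 0" using pu by auto
    have nux: "\<not> u dvd dx u"
    proof
      assume "u dvd dx u"
      moreover have "dx u \<noteq> 0" using du by (simp add: dx_def pderiv_eq_0_iff)
      ultimately have "degree u \<le> degree (dx u)" by (rule dvd_imp_degree_le)
      then show False using du by (simp add: dx_def degree_pderiv)
    qed
    define E1 where "E1 = (\<lambda>q. dx u * dy q + (- dy u) * dx q)"
    define E2 where "E2 = (\<lambda>q. dx u * dz q + (- dz u) * dx q)"
    have dE1: "is_der E1" unfolding E1_def by (rule der_comb[OF is_der_dy is_der_dx])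
    have dE2: "is_der E2" unfolding E2_def by (rule der_comb[OF is_der_dz is_der_dx])
    have E1u: "E1 u = 0" and E2u: "E2 u = 0" by (simp_all add: E1_def E2_def algebra_simps)
    have E1C: "E1 [:q:] = dx u * [:pderiv q:]" for q by (simp add: E1_def dy_const dx_const)
    have E2C: "E2 [:q:] = dx u * [:map_poly pderiv q:]" for q by (simp add: E2_def dz_const dx_const)
    have G1: "u dvd t * E1 s - s * E1 t"
    proof -
      have "t * E1 s - s * E1 t = pbr s t Z u" by (simp add: E1_def pbr_Z bzx_def byz_def algebra_simps)
      then show ?thesis using hP[of Z] by simp
    qed
    have G2: "u dvd t * E2 s - s * E2 t"
    proof -
      have "t * E2 s - s * E2 t = - pbr s t Y u" by (simp add: E2_def pbr_Y bxy_def byz_def algebra_simps)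
      then show ?thesis using hP[of Y] by simp
    qed
    define d where "d = degree u"
    define pj where "pj = (\<lambda>j. s ^ j * t ^ (d - j))"
    have "\<forall>j. \<exists>A Q. A \<noteq> 0 \<and> smult A (pj j) = u * Q + pseudo_mod (pj j) u"
      using pseudo_mod(1)[OF u0] by blast
    then obtain A Q where AQ: "\<And>j. A j \<noteq> 0 \<and> smult (A j) (pj j) = u * Q j + pseudo_mod (pj j) u"
      by metis
    define rr where "rr = (\<lambda>j. pseudo_mod (pj j) u)"
    have rrc: "\<forall>j\<in>{..d}. \<forall>m\<ge>d. coeff (rr j) m = 0"
    proof (intro ballI allI impI)
      fix j m assume "m \<ge> d"
      have "rr j = 0 \<or> degree (rr j) < degree u" unfolding rr_def by (rule pseudo_mod(2)[OF u0])
      then show "coeff (rr j) m = 0" using \<open>m \<ge> d\<close> d_def by (auto intro: coeff_eq_0)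
    qed
    obtain b where b: "\<exists>j\<in>{..d}. b j \<noteq> 0" "(\<Sum>j\<in>{..d}. smult (b j) (rr j)) = 0"
      using lin_dep[of "{..d}" d rr] rrc by auto
    define a0 where "a0 = (\<lambda>j. b j * A j)"
    have "rel s t d a0 = (\<Sum>j\<le>d. smult (b j) (smult (A j) (pj j)))"
      unfolding rel_def a0_def pj_def by (intro sum.cong refl) (simp add: mult.assoc)
    also have "\<dots> = (\<Sum>j\<le>d. u * smult (b j) (Q j) + smult (b j) (rr j))"
      by (intro sum.cong refl) (simp add: AQ rr_def smult_add_right)
    also have "\<dots> = u * (\<Sum>j\<le>d. smult (b j) (Q j))"
      using b(2) by (simp add: sum.distrib sum_distrib_left)
    finally have "u dvd rel s t d a0" by simp
    moreover have "\<exists>j\<le>d. a0 j \<noteq> 0" using b(1) AQ by (auto simp: a0_def)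
    ultimately obtain j0 where "a0 j0 \<noteq> 0 \<and> u dvd rel s t j0 a0"
      using top_exists[OF pu nt] by blast
    then have exS: "\<exists>k a. a k \<noteq> 0 \<and> u dvd rel s t k a" by blast
    define k0 where "k0 = (LEAST k. \<exists>a. a k \<noteq> 0 \<and> u dvd rel s t k a)"
    obtain a where a: "a k0 \<noteq> 0" "u dvd rel s t k0 a"
      using LeastI_ex[OF exS] unfolding k0_def by blast
    have noRel: "\<forall>j\<le>k'. c j = 0" if kk: "k' < k0" and rc: "u dvd rel s t k' c" for k' c
    proof (rule ccontr)
      assume "\<not> (\<forall>j\<le>k'. c j = 0)"
      then obtain j1 where "j1 \<le> k'" "c j1 \<noteq> 0 \<and> u dvd rel s t j1 c"
        using top_exists[OF pu nt rc] by blast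
      then have "k0 \<le> j1" unfolding k0_def by (intro Least_le) blast
      then show False using \<open>j1 \<le> k'\<close> kk by simp
    qed
    have k1: "k0 \<ge> 1"
    proof (rule ccontr)
      assume "\<not> k0 \<ge> 1"
      then have "k0 = 0" by simp
      then have "u dvd [:a 0:]" "a 0 \<noteq> 0" using a by (simp_all add: rel_0)
      then show False using not_dvd_const[OF du] by blast
    qed
    have step: "\<forall>j\<le>k0. a k0 * D (a j) - D (a k0) * a j = 0"
      if E: "is_der E" and Eu: "E u = 0" and EC: "\<And>q. E [:q:] = dx u * [:D q:]"
        and G: "u dvd t * E s - s * E t" for E D
    proof -
      have R1: "u dvd rel s t k0 (\<lambda>j. D (a j))" by (rule key_step[OF E Eu EC G pu nt nux a(2)])
      define bb where "bb = (\<lambda>j. a k0 * D (a j) - D (a k0) * a j)"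
      have eqb: "rel s t k0 bb = [:a k0:] * rel s t k0 (\<lambda>j. D (a j)) - [:D (a k0):] * rel s t k0 a"
        unfolding bb_def by (rule rel_lin)
      have "u dvd [:a k0:] * rel s t k0 (\<lambda>j. D (a j)) - [:D (a k0):] * rel s t k0 a"
        by (intro dvd_diff dvd_mult R1 a(2))
      then have Rb: "u dvd rel s t k0 bb" unfolding eqb .
      have bbk: "bb k0 = 0" by (simp add: bb_def mult.commute)
      have "rel s t k0 bb = t ^ (k0 - (k0 - 1)) * rel s t (k0 - 1) bb"
      proof (rule rel_top)
        show "k0 - 1 \<le> k0" by simp
        fix j assume "k0 - 1 < j" "j \<le> k0"
        then have "j = k0" using k1 by linarith
        then show "bb j = 0" using bbk by simp
      qed
      then have "u dvd t * rel s t (k0 - 1) bb" using Rb k1 by simp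
      then have "u dvd rel s t (k0 - 1) bb" using pu nt by (simp add: prime_elem_dvd_mult_iff)
      moreover have "k0 - 1 < k0" using k1 by simp
      ultimately have "\<forall>j\<le>k0 - 1. bb j = 0" using noRel by blast
      then have "\<forall>j\<le>k0. bb j = 0" using bbk by (metis One_nat_def Suc_pred k1 le_SucE less_eq_Suc_le)
      then show ?thesis by (simp add: bb_def)
    qed
    have st1: "\<forall>j\<le>k0. a k0 * pderiv (a j) - pderiv (a k0) * a j = 0"
      by (rule step[OF dE1 E1u E1C G1])
    have st2: "\<forall>j\<le>k0. a k0 * map_poly pderiv (a j) - map_poly pderiv (a k0) * a j = 0"
      by (rule step[OF dE2 E2u E2C G2])
    have "\<forall>j\<le>k0. \<exists>c. a j = smult [:c:] (a k0)"
    proof (intro allI impI)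
      fix j assume "j \<le> k0"
      then show "\<exists>c. a j = smult [:c:] (a k0)"
        using st1 st2 a(1) by (intro wronsk2) (auto simp: mult.commute)
    qed
    then obtain cf where cf: "\<And>j. j \<le> k0 \<Longrightarrow> a j = smult [:cf j:] (a k0)" by metis
    have cfk: "cf k0 = 1"
    proof -
      have "smult ([:cf k0:] - 1) (a k0) = 0" using cf[of k0] by (simp add: smult_diff_left)
      then have "[:cf k0:] = 1" using a(1) by simp
      then show ?thesis by (simp add: one_pCons)
    qed
    define g where "g = (\<Sum>j\<le>k0. monom (cf j) j)"
    have cg: "coeff g j = (if j \<le> k0 then cf j else 0)" for j
      by (simp add: g_def coeff_sum coeff_monom)
    have dg: "degree g = k0"
    proof (rule antisym)
      show "degree g \<le> k0" by (rule degree_le) (simp add: cg)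
      show "k0 \<le> degree g" by (rule le_degree) (simp add: cg cfk)
    qed
    have "rel s t k0 a = [:a k0:] * homog s t k0 g"
      unfolding rel_def homog_def sum_distrib_left
    proof (intro sum.cong refl)
      fix j assume "j \<in> {..k0}"
      then have "j \<le> k0" by simp
      then show "[:a j:] * s ^ j * t ^ (k0 - j) = [:a k0:] * (const3 (coeff g j) * s ^ j * t ^ (k0 - j))"
        using cf[of j] by (simp add: cg const3_def)
    qed
    then have "u dvd [:a k0:] * homog s t k0 g" using a(2) by simp
    then have "u dvd homog s t k0 g" using pu not_dvd_const[OF du a(1)]
      prime_elem_dvd_mult_iff[of u "[:a k0:]" "homog s t k0 g"] by blast
    then obtain r where "u dvd s - const3 r * t" using root_lemma[OF pu dg k1] by blast
    moreover have "fpencil s t 1 r = s - const3 r * t" by (simp add: fpencil_def const3_1)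
    ultimately show ?thesis using ok[of 1 r] by simp
  qed
qed


definition GOAL :: "cpoly3 \<Rightarrow> cpoly3 \<Rightarrow> cpoly3 set \<Rightarrow> bool" where
  "GOAL s t P \<longleftrightarrow> (\<exists>l m u. (l, m) \<noteq> (0, 0) \<and> fpencil s t l m \<noteq> 0 \<and> \<not> is_unit (fpencil s t l m)
                  \<and> irreducible u \<and> u dvd fpencil s t l m \<and> P = principal_ideal u)"

lemma case1:
  assumes pp: "poisson_prime s t P" and nz: "P \<noteq> {0}" and w: "byz s t \<notin> P"
  shows "GOAL s t P"
proof -
  obtain u where u: "prime_elem u" "degree u \<ge> 1" "P = principal_ideal u"
    using native_principal[OF pp w nz] by blast
  have uP: "u \<in> P" using u(3) by (simp add: mem_principal)
  have hP: "u dvd pbr s t a u" for a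
    using pp uP u(3) by (simp add: poisson_prime_def mem_principal)
  have hw: "\<not> (u dvd byz s t \<and> u dvd bzx s t \<and> u dvd bxy s t)"
    using w u(3) by (simp add: mem_principal)
  obtain l m where lm: "(l, m) \<noteq> (0, 0)" "fpencil s t l m \<noteq> 0" "\<not> is_unit (fpencil s t l m)"
      "u dvd fpencil s t l m"
    using native_pencil[OF u(1) u(2) hP hw] by blast
  have "irreducible u" using u(1) by (simp add: prime_elem_iff_irreducible)
  then show ?thesis unfolding GOAL_def using lm u(3) by blast
qed

lemma (in invol) goal_transfer:
  assumes "GOAL (F s) (F t) (F ` P)" shows "GOAL s t P"
proof -
  obtain l m u where lm: "(l, m) \<noteq> (0, 0)" "fpencil (F s) (F t) l m \<noteq> 0"
    "\<not> is_unit (fpencil (F s) (F t) l m)" "irreducible u" "u dvd fpencil (F s) (F t) l m"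
    "F ` P = principal_ideal u"
    using assms unfolding GOAL_def by blast
  have fe: "fpencil (F s) (F t) l m = F (fpencil s t l m)" by (simp add: fpencil)
  have "P = F ` (F ` P)" by (auto simp: img_iff inv)
  also have "\<dots> = principal_ideal (F u)" using lm(6) by (simp add: principal)
  finally have PP: "P = principal_ideal (F u)" .
  have "F u dvd F (F (fpencil s t l m))" using lm(5) fe by (simp add: dvd_iff)
  then have d: "F u dvd fpencil s t l m" by (simp add: inv)
  show ?thesis unfolding GOAL_def
    using lm(1) lm(2) lm(3) fe F_0_iff unit_iff irred[OF lm(4)] d PP by (metis)
qed

lemma forward_main:
  assumes pp: "poisson_prime s t P" and nz: "P \<noteq> {0}" and nr: "\<not> residually_null s t P"
  shows "GOAL s t P"
proof -
  have "bxy s t \<notin> P \<or> byz s t \<notin> P \<or> bzx s t \<notin> P"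
    using nr by (simp add: residually_null_def pbr_XY pbr_YZ pbr_ZX)
  then show ?thesis
  proof (elim disjE)
    assume "byz s t \<notin> P" then show ?thesis by (rule case1[OF pp nz])
  next
    assume w: "bzx s t \<notin> P"
    have pp': "poisson_prime (sxy s) (sxy t) (sxy ` P)" by (rule sxy_poisson[OF pp])
    have nz': "sxy ` P \<noteq> {0}"
    proof
      assume a: "sxy ` P = {0}"
      have "P = {0}"
      proof (intro set_eqI iffI)
        fix p assume "p \<in> P"
        then have "sxy p \<in> sxy ` P" by blast
        then show "p \<in> {0}" using a by (simp add: ixy.F_0_iff)
      next
        fix p :: cpoly3 assume "p \<in> {0}"
        then show "p \<in> P" using pp by (simp add: poisson_prime_def is_prime_ideal_def is_ideal_def)
      qed
      then show False using nz by simp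
    qed
    have w': "byz (sxy s) (sxy t) \<notin> sxy ` P" using w by (simp add: sxy_w1 ixy.img_iff sxy_invol)
    show ?thesis by (rule ixy.goal_transfer[OF case1[OF pp' nz' w']])
  next
    assume w: "bxy s t \<notin> P"
    have pp': "poisson_prime (sxz s) (sxz t) (sxz ` P)" by (rule sxz_poisson[OF pp])
    have nz': "sxz ` P \<noteq> {0}"
    proof
      assume a: "sxz ` P = {0}"
      have "P = {0}"
      proof (intro set_eqI iffI)
        fix p assume "p \<in> P"
        then have "sxz p \<in> sxz ` P" by blast
        then show "p \<in> {0}" using a by (simp add: ixz.F_0_iff)
      next
        fix p :: cpoly3 assume "p \<in> {0}"
        then show "p \<in> P" using pp by (simp add: poisson_prime_def is_prime_ideal_def is_ideal_def)
      qed
      then show False using nz by simp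
    qed
    have w': "byz (sxz s) (sxz t) \<notin> sxz ` P" using w by (simp add: sxz_w1 ixz.img_iff sxz_invol)
    show ?thesis by (rule ixz.goal_transfer[OF case1[OF pp' nz' w']])
  qed
qed

theorem theorem3p8:
  fixes s t :: cpoly3
  assumes "s \<noteq> 0" and "t \<noteq> 0" and "coprime s t"
  shows "poisson_prime s t P \<longleftrightarrow>
           P = {0}
         \<or> (poisson_prime s t P \<and> residually_null s t P)
         \<or> (\<exists>l m u. (l, m) \<noteq> (0, 0) \<and> fpencil s t l m \<noteq> 0 \<and> \<not> is_unit (fpencil s t l m)
                  \<and> irreducible u \<and> u dvd fpencil s t l m \<and> P = principal_ideal u)"
proof
  assume pp: "poisson_prime s t P"
  show "P = {0}
         \<or> (poisson_prime s t P \<and> residually_null s t P)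
         \<or> (\<exists>l m u. (l, m) \<noteq> (0, 0) \<and> fpencil s t l m \<noteq> 0 \<and> \<not> is_unit (fpencil s t l m)
                  \<and> irreducible u \<and> u dvd fpencil s t l m \<and> P = principal_ideal u)"
  proof (cases "P = {0}")
    case True then show ?thesis by simp
  next
    case nz: False
    show ?thesis
    proof (cases "residually_null s t P")
      case True then show ?thesis using pp by simp
    next
      case False
      then have "GOAL s t P" by (rule forward_main[OF pp nz])
      then show ?thesis unfolding GOAL_def by blast
    qed
  qed
next
  assume "P = {0}
         \<or> (poisson_prime s t P \<and> residually_null s t P)
         \<or> (\<exists>l m u. (l, m) \<noteq> (0, 0) \<and> fpencil s t l m \<noteq> 0 \<and> \<not> is_unit (fpencil s t l m)
                  \<and> irreducible u \<and> u dvd fpencil s t l m \<and> P = principal_ideal u)"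
  then show "poisson_prime s t P"
  proof (elim disjE exE conjE)
    assume "P = {0}" then show ?thesis by (simp add: poisson_prime_0)
  next
    assume "poisson_prime s t P" then show ?thesis .
  next
    fix l m u
    assume "(l, m) \<noteq> (0, 0)" "fpencil s t l m \<noteq> 0" "irreducible u" "u dvd fpencil s t l m"
      "P = principal_ideal u"
    then show ?thesis using backward3 by blast
  qed
qed


end
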